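(* Let $m\ge 6$ be an integer and let $G^*$ be a graph attaining the maximum spectral radius among all minimally 2-edge-connected graphs with $m$ edges. Then $\rho(G^* )>\sqrt{m-2}$.
   Context: Graphs are finite and simple. $\rho(G)$ denotes the largest eigenvalue of the adjacency matrix of $G$. A graph is minimally 2-edge-connected if it is 2-edge-connected but deleting any one edge leaves a graph that is not 2-edge-connected. *)

theory Defs
  imports Main "HOL-Analysis.Analysis"
begin

text \<open>A finite simple graph: a finite vertex set V (vertices are natural numbers,
  so every finite graph is represented up to isomorphism) and a set E of edges,
  each edge being a 2-element subset of V.\<close>

definition simple_graph :: "nat set \<Rightarrow> nat set set \<Rightarrow> bool" where
  "simple_graph V E \<longleftrightarrow> finite V \<and>
     (\<forall>e\<in>E. \<exists>u v. u \<noteq> v \<and> u \<in> V \<and> v \<in> V \<and> e = {u, v})"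

definition adj :: "nat set set \<Rightarrow> nat \<Rightarrow> nat \<Rightarrow> bool" where
  "adj E u v \<longleftrightarrow> {u, v} \<in> E \<and> u \<noteq> v"

definition connected_graph :: "nat set \<Rightarrow> nat set set \<Rightarrow> bool" where
  "connected_graph V E \<longleftrightarrow> V \<noteq> {} \<and>
     (\<forall>u\<in>V. \<forall>v\<in>V. (adj E)\<^sup>*\<^sup>* u v)"

definition two_edge_connected :: "nat set \<Rightarrow> nat set set \<Rightarrow> bool" where
  "two_edge_connected V E \<longleftrightarrow> simple_graph V E \<and> connected_graph V E \<and>
     (\<forall>e\<in>E. connected_graph V (E - {e}))"

definition minimally_two_edge_connected :: "nat set \<Rightarrow> nat set set \<Rightarrow> bool" where
  "minimally_two_edge_connected V E \<longleftrightarrow> two_edge_connected V E \<and>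
     (\<forall>e\<in>E. \<not> two_edge_connected V (E - {e}))"

definition adj_eigenvalue :: "nat set \<Rightarrow> nat set set \<Rightarrow> real \<Rightarrow> bool" where
  "adj_eigenvalue V E r \<longleftrightarrow> (\<exists>x :: nat \<Rightarrow> real.
     (\<exists>v\<in>V. x v \<noteq> 0) \<and>
     (\<forall>v\<in>V. (\<Sum>u\<in>{u\<in>V. adj E v u}. x u) = r * x v))"

definition spectral_radius :: "nat set \<Rightarrow> nat set set \<Rightarrow> real" where
  "spectral_radius V E = Max {r. adj_eigenvalue V E r}"

end

theory Submission
  imports Defs "Jordan_Normal_Form.Char_Poly"
begin

lemma eig_finite:
  assumes fin: "finite V"
  shows "finite {r. adj_eigenvalue V E r}"
proof -
  define xs where "xs = sorted_list_of_set V"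
  define n where "n = length xs"
  have dist: "distinct xs" and setxs: "set xs = V" using fin by (auto simp: xs_def)
  define A :: "real mat" where "A = Matrix.mat n n (\<lambda>(i,j). if adj E (xs!i) (xs!j) then 1 else 0)"
  have A: "A \<in> carrier_mat n n" by (simp add: A_def)
  have sub: "{r. adj_eigenvalue V E r} \<subseteq> {r. poly (char_poly A) r = 0}"
  proof
    fix r assume "r \<in> {r. adj_eigenvalue V E r}"
    then obtain x :: "nat \<Rightarrow> real" where nz: "\<exists>v\<in>V. x v \<noteq> 0"
      and eq: "\<forall>v\<in>V. (\<Sum>u\<in>{u\<in>V. adj E v u}. x u) = r * x v"
      unfolding adj_eigenvalue_def by auto
    define w where "w = Matrix.vec n (\<lambda>i. x (xs!i))"
    have w: "w \<in> carrier_vec n" by (simp add: w_def)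
    have bij: "bij_betw (\<lambda>j. xs!j) {0..<n} V"
      using bij_betw_nth[OF dist, of "{0..<n}" V] setxs n_def by (simp add: atLeast0LessThan)
    have "A *\<^sub>v w = r \<cdot>\<^sub>v w"
    proof (rule eq_vecI)
      fix i assume "i < dim_vec (r \<cdot>\<^sub>v w)"
      hence i: "i < n" by (simp add: w_def)
      have xi: "xs!i \<in> V" using i setxs n_def by auto
      have "(A *\<^sub>v w) $ i = (\<Sum>j\<in>{0..<n}. (if adj E (xs!i) (xs!j) then 1 else 0) * x (xs!j))"
        using i by (simp add: A_def w_def mult_mat_vec_def scalar_prod_def row_def)
      also have "\<dots> = (\<Sum>j\<in>{0..<n}. (\<lambda>u. if adj E (xs!i) u then x u else 0) (xs!j))"
        by (rule sum.cong) auto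
      also have "\<dots> = (\<Sum>u\<in>V. if adj E (xs!i) u then x u else 0)"
        by (rule sum.reindex_bij_betw[OF bij])
      also have "\<dots> = (\<Sum>u\<in>{u\<in>V. adj E (xs!i) u}. x u)"
        using fin by (simp add: sum.inter_filter)
      also have "\<dots> = r * x (xs!i)" using eq xi by auto
      finally show "(A *\<^sub>v w) $ i = (r \<cdot>\<^sub>v w) $ i" using i by (simp add: w_def)
    qed (simp add: A_def w_def)
    moreover have "w \<noteq> 0\<^sub>v n"
    proof
      assume w0: "w = 0\<^sub>v n"
      from nz obtain v where v: "v \<in> V" "x v \<noteq> 0" by auto
      then obtain j where j: "j < n" "xs!j = v" using setxs n_def by (metis in_set_conv_nth)
      have "w $ j = 0" using w0 j by simp
      thus False using j v by (simp add: w_def)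
    qed
    ultimately have "eigenvalue A r" unfolding eigenvalue_def eigenvector_def
      using w A by auto
    thus "r \<in> {r. poly (char_poly A) r = 0}" using eigenvalue_root_char_poly[OF A] by simp
  qed
  have "char_poly A \<noteq> 0" using degree_monic_char_poly[OF A] by auto
  hence "finite {r. poly (char_poly A) r = 0}" by (rule poly_roots_finite)
  thus ?thesis using sub finite_subset by blast
qed


lemma adj_sym: "adj E u v = adj E v u"
  by (auto simp: adj_def insert_commute)

lemma reach_sym: "(adj E)\<^sup>*\<^sup>* u v \<Longrightarrow> (adj E)\<^sup>*\<^sup>* v u"
proof (induction rule: rtranclp_induct)
  case base thus ?case by simp
next
  case (step y z)
  have "adj E z y" using step(2) adj_sym[of E y z] by simp
  thus ?case using step(3) by (rule converse_rtranclp_into_rtranclp)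
qed

lemma conn_from_root:
  assumes "r \<in> V" "\<forall>v\<in>V. (adj E)\<^sup>*\<^sup>* r v" shows "connected_graph V E"
  unfolding connected_graph_def using assms
  by (meson empty_iff reach_sym rtranclp_trans)

lemma reach_step: "{u,v} \<in> F \<Longrightarrow> u \<noteq> v \<Longrightarrow> (adj F)\<^sup>*\<^sup>* x u \<Longrightarrow> (adj F)\<^sup>*\<^sup>* x v"
  by (simp add: adj_def rtranclp.rtrancl_into_rtrancl)

lemma reach_mono: assumes "F \<subseteq> G" "(adj F)\<^sup>*\<^sup>* u v" shows "(adj G)\<^sup>*\<^sup>* u v"
  using assms(2) by (induction rule: rtranclp_induct) (use assms(1) in \<open>auto simp: adj_def intro: rtranclp.rtrancl_into_rtrancl\<close>)

lemma not_2ec: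
  assumes "w \<in> V" "z \<in> V" "z \<noteq> w" "f \<in> F" "\<forall>e\<in>F. w \<in> e \<longrightarrow> e = f"
  shows "\<not> two_edge_connected V F"
proof
  assume "two_edge_connected V F"
  hence "connected_graph V (F - {f})" using assms(4) unfolding two_edge_connected_def by auto
  hence "(adj (F - {f}))\<^sup>*\<^sup>* w z" using assms(1,2) unfolding connected_graph_def by auto
  thus False
  proof (cases rule: converse_rtranclpE)
    case base thus False using assms(3) by simp
  next
    case (step y)
    thus False using assms(5) by (auto simp: adj_def)
  qed
qed

definition K :: "nat \<Rightarrow> nat set set" where
  "K k = (\<lambda>c. {0,c}) ` {2..k+1} \<union> (\<lambda>c. {1,c}) ` {2..k+1}"

definition Tg :: "nat \<Rightarrow> nat set set" where
  "Tg n = K n \<union> {{0,n+2},{0,n+3},{n+2,n+3}}"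

lemma K_reach:
  assumes k: "2 \<le> k" and F: "K k - {e} \<subseteq> F" and v: "v \<in> {0..k+1}"
  shows "(adj F)\<^sup>*\<^sup>* 0 v"
proof -
  have inF: "x \<in> K k \<Longrightarrow> x \<noteq> e \<Longrightarrow> x \<in> F" for x using F by auto
  have r1: "(adj F)\<^sup>*\<^sup>* 0 1"
  proof (cases "e = {0,2} \<or> e = {1,2}")
    case True
    have "{0,3} \<in> F" using True k by (intro inF) (auto simp: K_def doubleton_eq_iff)
    moreover have "{3,1} \<in> F" using True k by (intro inF) (auto simp: K_def doubleton_eq_iff insert_commute)
    ultimately show ?thesis using reach_step[of 0 3 F 0] reach_step[of 3 1 F 0] by simp
  next
    case False
    have "{0,2} \<in> F" using False k by (intro inF) (auto simp: K_def)
    moreover have "{2,1} \<in> F" using False k by (intro inF) (auto simp: K_def insert_commute)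
    ultimately show ?thesis using reach_step[of 0 2 F 0] reach_step[of 2 1 F 0] by simp
  qed
  show ?thesis
  proof (cases "v \<le> 1")
    case True
    then consider "v = 0" | "v = 1" by linarith
    thus ?thesis using r1 by cases auto
  next
    case False
    show ?thesis
    proof (cases "e = {0,v}")
      case True
      have "{1,v} \<in> F" using True False v by (intro inF) (auto simp: K_def doubleton_eq_iff)
      thus ?thesis using r1 False by (intro reach_step[of 1 v]) auto
    next
      case False2: False
      have "{0,v} \<in> F" using False2 False v by (intro inF) (auto simp: K_def)
      thus ?thesis using False by (intro reach_step[of 0 v]) auto
    qed
  qed
qed

lemma K_cases [consumes 1, case_names z o]: "e \<in> K k \<Longrightarrow> (\<And>c. c \<in> {2..k+1} \<Longrightarrow> e = {0,c} \<Longrightarrow> P) \<Longrightarrow> (\<And>c. c \<in> {2..k+1} \<Longrightarrow> e = {1,c} \<Longrightarrow> P) \<Longrightarrow> P"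
  unfolding K_def by auto

lemma K_simple: "simple_graph {0..k+1} (K k)"
  unfolding simple_graph_def K_def
proof (intro conjI ballI)
  fix e assume "e \<in> (\<lambda>c. {0,c}) ` {2..k+1} \<union> (\<lambda>c. {1::nat,c}) ` {2..k+1}"
  then obtain c a where "c \<in> {2..k+1}" "a \<le> 1" "e = {a,c}"
    by (elim UnE imageE) (rule that; auto)+
  thus "\<exists>u v. u \<noteq> v \<and> u \<in> {0..k+1} \<and> v \<in> {0..k+1} \<and> e = {u, v}" by (intro exI[of _ a] exI[of _ c]) auto
qed simp

lemma K_min: assumes "2 \<le> k" shows "minimally_two_edge_connected {0..k+1} (K k)"
proof -
  have conn: "connected_graph {0..k+1} (K k - {e})" for e
    by (rule conn_from_root[of 0]) (auto intro: K_reach[OF assms])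
  have "two_edge_connected {0..k+1} (K k)"
    unfolding two_edge_connected_def using K_simple conn
    by (auto intro!: conn_from_root[of 0] K_reach[OF assms, of "{}"])
  moreover have "\<not> two_edge_connected {0..k+1} (K k - {e})" if e: "e \<in> K k" for e
    using e
  proof (cases rule: K_cases)
    case (z c)
    show ?thesis by (rule not_2ec[of c _ 0 "{1,c}"]) (use z in \<open>auto simp: K_def doubleton_eq_iff\<close>)
  next
    case (o c)
    show ?thesis by (rule not_2ec[of c _ 0 "{0,c}"]) (use o in \<open>auto simp: K_def doubleton_eq_iff\<close>)
  qed
  ultimately show ?thesis unfolding minimally_two_edge_connected_def by auto
qed

lemma neq: "2 \<le> (y::nat) \<Longrightarrow> {0::nat,x} \<noteq> {1,y}"
proof
  assume "2 \<le> y" "{0::nat,x} = {1,y}"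
  hence "(0::nat) \<in> {1,y}" by (metis insertI1)
  thus False using \<open>2 \<le> y\<close> by simp
qed

lemma card_K: "card (K k) = 2 * k"
proof -
  have i1: "inj_on (\<lambda>c. {0::nat,c}) {2..k+1}" by (auto simp: inj_on_def doubleton_eq_iff)
  have i2: "inj_on (\<lambda>c. {1::nat,c}) {2..k+1}" by (auto simp: inj_on_def doubleton_eq_iff)
  have d: "(\<lambda>c. {0::nat,c}) ` {2..k+1} \<inter> (\<lambda>c. {1,c}) ` {2..k+1} = {}"
    unfolding disjoint_iff by (clarsimp simp del: doubleton_eq_iff) (metis neq One_nat_def)
  have "card ((\<lambda>c. {0::nat,c}) ` {2..k+1} \<union> (\<lambda>c. {1,c}) ` {2..k+1})
      = card ((\<lambda>c. {0::nat,c}) ` {2..k+1}) + card ((\<lambda>c. {1::nat,c}) ` {2..k+1})"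
    by (rule card_Un_disjoint) (simp_all only: d finite_imageI finite_atLeastAtMost)
  also have "\<dots> = 2 * k" by (simp only: card_image[OF i1] card_image[OF i2] card_atLeastAtMost)
  finally show ?thesis unfolding K_def .
qed

lemma dbl1: "{a,b} = {a,c} \<Longrightarrow> b = (c::nat)"
  by (metis doubleton_eq_iff)

lemma T_reach:
  assumes n: "2 \<le> n" and F: "Tg n - {e} \<subseteq> F" and v: "v \<in> {0..n+3}"
  shows "(adj F)\<^sup>*\<^sup>* 0 v"
proof -
  have inF: "x \<in> Tg n \<Longrightarrow> x \<noteq> e \<Longrightarrow> x \<in> F" for x using F by blast
  have KF: "K n - {e} \<subseteq> F" using F unfolding Tg_def by blast
  show ?thesis
  proof (cases "v \<le> n + 1")
    case True thus ?thesis using K_reach[OF n KF, of v] by simp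
  next
    case False
    hence vv: "v = n+2 \<or> v = n+3" using v by auto
    define w where "w = (if v = n+2 then n+3 else n+2)"
    have w: "w \<noteq> v" "w \<noteq> 0" "v \<noteq> 0" using vv by (auto simp: w_def)
    have tri: "{0,n+2} \<in> Tg n" "{0,n+3} \<in> Tg n" "{n+2,n+3} \<in> Tg n" "{n+3,n+2} \<in> Tg n"
      unfolding Tg_def by (simp_all add: insert_commute)
    have e1: "{0,v} \<in> Tg n" "{0,w} \<in> Tg n" "{w,v} \<in> Tg n"
      using vv tri unfolding w_def by auto
    show ?thesis
    proof (cases "e = {0,v}")
      case False
      hence "{0,v} \<in> F" using e1 inF by blast
      thus ?thesis using w reach_step[of 0 v F 0] by simp
    next
      case True
      have "{0,w} \<noteq> e" using True w dbl1 by blast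
      moreover have "{w,v} \<noteq> e" proof assume "{w,v} = e" hence "0 \<in> {w,v}" using True by simp
        thus False using w by simp qed
      ultimately have "{0,w} \<in> F" "{w,v} \<in> F" using e1 inF by blast+
      thus ?thesis using w reach_step[of 0 w F 0] reach_step[of w v F 0] by simp
    qed
  qed
qed

lemma T_simple: "simple_graph {0..n+3} (Tg n)"
  unfolding simple_graph_def
proof (intro conjI ballI)
  fix e assume e: "e \<in> Tg n"
  show "\<exists>u v. u \<noteq> v \<and> u \<in> {0..n+3} \<and> v \<in> {0..n+3} \<and> e = {u, v}"
  proof (cases "e \<in> K n")
    case True
    then obtain u v where uv: "u \<noteq> v" "u \<in> {0..n+1}" "v \<in> {0..n+1}" "e = {u,v}"
      using K_simple[of n] unfolding simple_graph_def by meson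
    show ?thesis by (rule exI[of _ u], rule exI[of _ v]) (use uv in simp)
  next
    case False
    hence "e = {0,n+2} \<or> e = {0,n+3} \<or> e = {n+2,n+3}" using e unfolding Tg_def by simp
    moreover have "\<exists>u v. u \<noteq> v \<and> u \<in> {0..n+3} \<and> v \<in> {0..n+3} \<and> {0,n+2} = {u, v}"
      by (rule exI[of _ 0], rule exI[of _ "n+2"]) simp
    moreover have "\<exists>u v. u \<noteq> v \<and> u \<in> {0..n+3} \<and> v \<in> {0..n+3} \<and> {0,n+3} = {u, v}"
      by (rule exI[of _ 0], rule exI[of _ "n+3"]) simp
    moreover have "\<exists>u v. u \<noteq> v \<and> u \<in> {0..n+3} \<and> v \<in> {0..n+3} \<and> {n+2,n+3} = {u, v}"
      by (rule exI[of _ "n+2"], rule exI[of _ "n+3"]) simp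
    ultimately show ?thesis by metis
  qed
qed simp

lemma T_cases [consumes 1, case_names z o a b c]: "e \<in> Tg n \<Longrightarrow>
   (\<And>c. c \<in> {2..n+1} \<Longrightarrow> e = {0,c} \<Longrightarrow> P) \<Longrightarrow> (\<And>c. c \<in> {2..n+1} \<Longrightarrow> e = {1,c} \<Longrightarrow> P)
   \<Longrightarrow> (e = {0,n+2} \<Longrightarrow> P) \<Longrightarrow> (e = {0,n+3} \<Longrightarrow> P) \<Longrightarrow> (e = {n+2,n+3} \<Longrightarrow> P) \<Longrightarrow> P"
  unfolding Tg_def K_def by auto

lemma T_min: assumes "2 \<le> n" shows "minimally_two_edge_connected {0..n+3} (Tg n)"
proof -
  have conn: "connected_graph {0..n+3} (Tg n - {e})" for e
    by (rule conn_from_root[of 0]) (auto intro: T_reach[OF assms])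
  have "two_edge_connected {0..n+3} (Tg n)"
    unfolding two_edge_connected_def using T_simple conn
    by (auto intro!: conn_from_root[of 0] T_reach[OF assms, of "{}"])
  moreover have "\<not> two_edge_connected {0..n+3} (Tg n - {e})" if e: "e \<in> Tg n" for e
    using e
  proof (cases rule: T_cases)
    case (z c)
    show ?thesis by (rule not_2ec[of c _ 0 "{1,c}"]) (use z in \<open>auto simp: Tg_def K_def doubleton_eq_iff\<close>)
  next
    case (o c)
    show ?thesis by (rule not_2ec[of c _ 0 "{0,c}"]) (use o in \<open>auto simp: Tg_def K_def doubleton_eq_iff\<close>)
  next
    case a
    show ?thesis by (rule not_2ec[of "n+2" _ 0 "{n+2,n+3}"]) (use a in \<open>auto simp: Tg_def K_def doubleton_eq_iff\<close>)
  next
    case b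
    show ?thesis by (rule not_2ec[of "n+3" _ 0 "{n+2,n+3}"]) (use b in \<open>auto simp: Tg_def K_def doubleton_eq_iff\<close>)
  next
    case c
    show ?thesis by (rule not_2ec[of "n+2" _ 0 "{0,n+2}"]) (use c in \<open>auto simp: Tg_def K_def doubleton_eq_iff\<close>)
  qed
  ultimately show ?thesis unfolding minimally_two_edge_connected_def by auto
qed

lemma K_big: "x \<in> K n \<Longrightarrow> n+2 \<notin> x \<and> n+3 \<notin> x"
  unfolding K_def by auto

lemma card_Tg: "card (Tg n) = 2 * n + 3"
proof -
  have d: "K n \<inter> {{0,n+2},{0,n+3},{n+2,n+3}} = {}" using K_big[of _ n] by blast
  have a1: "{0::nat,n+2} \<noteq> {0,n+3}" using dbl1[of 0 "n+2" "n+3"] by linarith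
  have a2: "{0::nat,n+2} \<noteq> {n+2,n+3}" proof assume h: "{0::nat,n+2} = {n+2,n+3}"
    have "n+3 \<in> {n+2,n+3}" by simp
    hence "n+3 \<in> {0::nat,n+2}" using h by simp thus False by simp qed
  have a3: "{0::nat,n+3} \<noteq> {n+2,n+3}" proof assume h: "{0::nat,n+3} = {n+2,n+3}"
    have "n+2 \<in> {n+2,n+3}" by simp
    hence "n+2 \<in> {0::nat,n+3}" using h by simp thus False by simp qed
  have c3: "card {{0::nat,n+2},{0,n+3},{n+2,n+3}} = 3" using a1 a2 a3 by simp
  have "finite (K n)" by (simp add: K_def)
  hence "card (K n \<union> {{0,n+2},{0,n+3},{n+2,n+3}}) = card (K n) + card {{0::nat,n+2},{0,n+3},{n+2,n+3}}"
    by (intro card_Un_disjoint d) simp_all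
  thus ?thesis unfolding Tg_def using c3 card_K[of n] by simp
qed

lemma memK: "{a,u} \<in> K k \<longleftrightarrow> (a \<le> 1 \<and> 2 \<le> u \<and> u \<le> k+1) \<or> (u \<le> 1 \<and> 2 \<le> a \<and> a \<le> k+1)"
proof
  assume "{a,u} \<in> K k"
  then obtain b c where bc: "b \<le> 1" "2 \<le> c" "c \<le> k+1" "{a,u} = {b,c}"
    unfolding K_def by (elim UnE imageE) (rule that; simp)+
  hence "a = b \<and> u = c \<or> a = c \<and> u = b" by (simp only: doubleton_eq_iff)
  thus "(a \<le> 1 \<and> 2 \<le> u \<and> u \<le> k+1) \<or> (u \<le> 1 \<and> 2 \<le> a \<and> a \<le> k+1)" using bc by auto
next
  assume h: "(a \<le> 1 \<and> 2 \<le> u \<and> u \<le> k+1) \<or> (u \<le> 1 \<and> 2 \<le> a \<and> a \<le> k+1)"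
  have z: "{0,c} \<in> K k" "{1,c} \<in> K k" if "2 \<le> c" "c \<le> k+1" for c
    unfolding K_def using that by auto
  from h show "{a,u} \<in> K k"
  proof (elim disjE conjE)
    assume "a \<le> 1" "2 \<le> u" "u \<le> k+1"
    moreover have "a = 0 \<or> a = 1" using \<open>a \<le> 1\<close> by auto
    ultimately show ?thesis using z by auto
  next
    assume "u \<le> 1" "2 \<le> a" "a \<le> k+1"
    moreover have "u = 0 \<or> u = 1" using \<open>u \<le> 1\<close> by auto
    ultimately show ?thesis using z by (auto simp: insert_commute)
  qed
qed

lemma nbK0: "{u \<in> {0..k+1}. adj (K k) 0 u} = {2..k+1}"
  by (auto simp: adj_def memK)
lemma nbK1: "{u \<in> {0..k+1}. adj (K k) 1 u} = {2..k+1}"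
  by (auto simp: adj_def memK)
lemma nbKc: "c \<in> {2..k+1} \<Longrightarrow> {u \<in> {0..k+1}. adj (K k) c u} = {0,1}"
  by (auto simp: adj_def memK)

lemma memT: "{a,u} \<in> Tg n \<longleftrightarrow> {a,u} \<in> K n \<or> {a,u} = {0,n+2} \<or> {a,u} = {0,n+3} \<or> {a,u} = {n+2,n+3}"
  unfolding Tg_def Un_iff insert_iff empty_iff simp_thms by (rule TrueI)

lemma nbT0: "{u \<in> {0..n+3}. adj (Tg n) 0 u} = {2..n+3}"
  by (auto simp: adj_def memT memK doubleton_eq_iff)
lemma nbT1: "{u \<in> {0..n+3}. adj (Tg n) 1 u} = {2..n+1}"
  by (auto simp: adj_def memT memK doubleton_eq_iff)
lemma nbTc: "c \<in> {2..n+1} \<Longrightarrow> {u \<in> {0..n+3}. adj (Tg n) c u} = {0,1}"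
  by (auto simp: adj_def memT memK doubleton_eq_iff)
lemma nbTd: "{u \<in> {0..n+3}. adj (Tg n) (n+2) u} = {0,n+3}"
  by (auto simp: adj_def memT memK doubleton_eq_iff)
lemma nbTe: "{u \<in> {0..n+3}. adj (Tg n) (n+3) u} = {0,n+2}"
  by (auto simp: adj_def memT memK doubleton_eq_iff)

lemma K_eig:
  assumes k: "1 \<le> k"
  shows "adj_eigenvalue {0..k+1} (K k) (sqrt (2*k))"
proof -
  define r where "r = sqrt (2*k)"
  have r2: "r * r = 2 * k" unfolding r_def by simp
  define x where "x = (\<lambda>v::nat. if v \<le> 1 then 1 else r / k)"
  have "(\<Sum>u\<in>{u\<in>{0..k+1}. adj (K k) v u}. x u) = r * x v" if v: "v \<in> {0..k+1}" for v
  proof (cases "v \<le> 1")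
    case True
    hence "v = 0 \<or> v = 1" by auto
    hence nb: "{u\<in>{0..k+1}. adj (K k) v u} = {2..k+1}" using nbK0[of k] nbK1[of k] by (elim disjE) simp_all
    have "(\<Sum>u\<in>{2..k+1}. x u) = (\<Sum>u\<in>{2..k+1}. r / k)" by (rule sum.cong) (auto simp: x_def)
    also have "\<dots> = r" using k by simp
    finally show ?thesis using nb True by (simp add: x_def)
  next
    case False
    hence nb: "{u\<in>{0..k+1}. adj (K k) v u} = {0,1}" using nbKc v by auto
    show ?thesis using nb False k r2 by (simp add: x_def field_simps)
  qed
  moreover have "x 0 \<noteq> 0" by (simp add: x_def)
  ultimately show ?thesis unfolding adj_eigenvalue_def r_def by (intro exI[of _ x]) force
qed

lemma T_eig:
  fixes n :: nat and r :: real
  assumes n: "1 \<le> n" and r1: "r > 1" and rn: "r * r > n"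
    and g: "r * (r*r - n) * (r - 1) - n * r * (r - 1) - 2 * (r*r - n) = 0"
  shows "adj_eigenvalue {0..n+3} (Tg n) r"
proof -
  define y where "y = r / (r*r - n)"
  define q where "q = n / (r*r - n)"
  define t where "t = 1 / (r - 1)"
  define x where "x = (\<lambda>v::nat. if v = 0 then 1 else if v = 1 then q else if v \<le> n+1 then y else t)"
  have d1: "r*r - n \<noteq> 0" "r - 1 \<noteq> 0" using r1 rn by auto
  have sK: "(\<Sum>u\<in>{2..n+1}. x u) = n * y"
  proof -
    have "(\<Sum>u\<in>{2..n+1}. x u) = (\<Sum>u\<in>{2..n+1}. y)" by (rule sum.cong) (auto simp: x_def)
    thus ?thesis by simp
  qed
  have "(\<Sum>u\<in>{u\<in>{0..n+3}. adj (Tg n) v u}. x u) = r * x v" if v: "v \<in> {0..n+3}" for v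
  proof -
    consider "v = 0" | "v = 1" | "v \<in> {2..n+1}" | "v = n+2" | "v = n+3" using v by fastforce
    thus ?thesis
    proof cases
      case 1
      have sp: "{2..n+3} = {2..n+1} \<union> {n+2, n+3}" by auto
      have s0: "(\<Sum>u\<in>{2..n+3}. x u) = n * y + 2 * t"
        unfolding sp by (subst sum.union_disjoint) (auto simp: sK x_def)
      have eq: "n*r*(r-1) + 2*(r*r-n) = r*((r*r-n)*(r-1))" using g by (simp add: algebra_simps)
      have "n * y + 2 * t = (n*r*(r-1) + 2*(r*r-n)) / ((r*r-n)*(r-1))"
        unfolding y_def t_def using d1 by (simp add: field_simps)
      also have "\<dots> = r" unfolding eq using d1 by simp
      finally have "n * y + 2 * t = r" .
      thus ?thesis using 1 nbT0 s0 by (simp add: x_def)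
    next
      case 2
      have "n * y = r * q" unfolding y_def q_def by simp
      thus ?thesis using 2 nbT1 sK by (simp add: x_def)
    next
      case 3
      have "1 + q = r * y" using d1 unfolding y_def q_def by (simp add: field_simps)
      thus ?thesis using 3 nbTc[OF 3] by (auto simp: x_def)
    next
      case 4
      have "1 + t = r * t" using d1 unfolding t_def by (simp add: field_simps)
      thus ?thesis using 4 nbTd by (simp add: x_def)
    next
      case 5
      have "1 + t = r * t" using d1 unfolding t_def by (simp add: field_simps)
      thus ?thesis using 5 nbTe by (simp add: x_def)
    qed
  qed
  moreover have "x 0 \<noteq> 0" by (simp add: x_def)
  ultimately show ?thesis unfolding adj_eigenvalue_def by (intro exI[of _ x]) force
qed


definition Gp :: "nat \<Rightarrow> real \<Rightarrow> real" where
  "Gp n r = r * (r*r - n) * (r - 1) - n * r * (r - 1) - 2 * (r*r - n)"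

lemma root_exists:
  fixes n :: nat
  assumes n: "2 \<le> n"
  shows "\<exists>r. r > sqrt (2*n+1) \<and> Gp n r = 0"
proof -
  define b :: real where "b = 2*n+1"
  define sq where "sq = sqrt b"
  have ss: "sq * sq = 2*n+1" unfolding sq_def b_def by simp
  have s0: "sq \<ge> 0" unfolding sq_def b_def by simp
  have "Gp n sq = sq * (n+1) * (sq - 1) - n * sq * (sq - 1) - 2 * (n+1)" unfolding Gp_def ss by simp
  also have "\<dots> = sq * sq - sq - 2*n - 2" by (simp add: algebra_simps)
  also have "\<dots> = -1 - sq" using ss by simp
  finally have Gs: "Gp n sq < 0" using s0 by simp
  have b3: "b \<ge> 5" using n unfolding b_def by simp
  have bb: "b * 1 \<le> b * b" using b3 by (intro mult_left_mono) auto
  have "sqrt b \<le> sqrt (b * b)" using bb by (intro real_sqrt_le_mono) simp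
  hence sb: "sq \<le> b" using b3 unfolding sq_def by (simp add: real_sqrt_mult_self)
  have Gb_eq: "Gp n b = b * (b - 1) * (b * b - 2*n) - 2 * (b * b) + 2 * real n" unfolding Gp_def by (simp add: algebra_simps)
  have h1: "b * 2 \<le> b * (b - 1)" using b3 by (intro mult_left_mono) auto
  have h1': "2 * b \<le> b * b" using b3 by (intro mult_right_mono) auto
  have bn: "b = 2 * real n + 1" unfolding b_def by simp
  have h2: "b * b - 2*n \<ge> b" using h1' bn by linarith
  have "b * (b - 1) * (b * b - 2*n) \<ge> (b * 2) * b" using h1 h2 b3 by (intro mult_mono) auto
  moreover have "(b * 2) * b = 2 * (b * b)" by simp
  moreover have "real n \<ge> 0" by simp
  ultimately have Gb: "Gp n b \<ge> 0" unfolding Gb_eq by linarith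
  have cont: "continuous_on {sq..b} (Gp n)" unfolding Gp_def by (intro continuous_intros)
  obtain r where r: "sq \<le> r" "r \<le> b" "Gp n r = 0" using IVT'[of "Gp n" sq 0 b, OF _ Gb sb cont] Gs by auto
  have "r \<noteq> sq" using r Gs by auto
  hence "r > sq" using r by simp
  thus ?thesis using r unfolding sq_def b_def by auto
qed

lemma rad_ge:
  assumes "finite V" "adj_eigenvalue V E r"
  shows "r \<le> spectral_radius V E"
  unfolding spectral_radius_def using eig_finite[OF assms(1), of E] assms(2) by (intro Max_ge) auto

theorem lemma2p10:
  fixes m :: nat and V :: "nat set" and E :: "nat set set"
  assumes "m \<ge> 6"
    and "minimally_two_edge_connected V E" and "card E = m"
    and "\<forall>W F. minimally_two_edge_connected W F \<and> card F = m \<longrightarrow>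
           spectral_radius W F \<le> spectral_radius V E"
  shows "spectral_radius V E > sqrt (real m - 2)"
proof (cases "even m")
  case True
  define k where "k = m div 2"
  have mk: "m = 2*k" using True unfolding k_def by simp
  have k: "3 \<le> k" using assms(1) mk by simp
  have min: "minimally_two_edge_connected {0..k+1} (K k)" using K_min k by simp
  have c: "card (K k) = m" using card_K mk by simp
  have "sqrt (2*k) \<le> spectral_radius {0..k+1} (K k)" using K_eig[of k] k by (intro rad_ge) auto
  also have "\<dots> \<le> spectral_radius V E" using assms(4) min c by blast
  finally have le: "sqrt (2*k) \<le> spectral_radius V E" .
  have "sqrt (real m - 2) < sqrt (2*k)" using mk by simp
  thus ?thesis using le by linarith
next
  case False
  define n where "n = (m - 3) div 2"
  have mn: "m = 2*n+3" using False assms(1) unfolding n_def by presburger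
  have n: "2 \<le> n" using assms(1) mn False by presburger
  obtain r where r: "r > sqrt (2*n+1)" "Gp n r = 0" using root_exists[OF n] by blast
  have s1: "sqrt (2*n+1) \<ge> 1" by simp
  have r1: "r > 1" using r s1 by linarith
  have "r * r > sqrt (2*n+1) * sqrt (2*n+1)"
    using r(1) s1 r1 by (intro mult_strict_mono) auto
  hence rn: "r * r > n" by simp
  have min: "minimally_two_edge_connected {0..n+3} (Tg n)" using T_min n by simp
  have c: "card (Tg n) = m" using card_Tg mn by simp
  have "r \<le> spectral_radius {0..n+3} (Tg n)"
    using T_eig[of n r] n r1 rn r(2) unfolding Gp_def by (intro rad_ge) auto
  also have "\<dots> \<le> spectral_radius V E" using assms(4) min c by blast
  finally have le: "r \<le> spectral_radius V E" .
  have "real m - 2 = 2*n+1" using mn by simp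
  thus ?thesis using le r(1) by simp
qed

end
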